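(* Let $a>0$ and $0<h<\frac{\pi}{2a}$. For each integer $m\ge2$, let $\alpha_m$ be the $m$-th positive solution $q$ (in increasing order) of $\tan(hq)=\frac{2aq}{q^2-a^2}$. Then $\alpha_m\in\left[\frac{(m-1)\pi}{h},\frac{(m-1)\pi}{h}+\frac{\pi}{2h}\right]$ for all $m\ge2$. *)

theory Defs
  imports Complex_Main
begin

definition tan_sols :: "real \<Rightarrow> real \<Rightarrow> real set" where
  "tan_sols a h = {q. q > 0 \<and> cos (h * q) \<noteq> 0 \<and> q^2 \<noteq> a^2 \<and>
                       tan (h * q) = 2 * a * q / (q^2 - a^2)}"

definition is_mth_sol :: "real \<Rightarrow> real \<Rightarrow> nat \<Rightarrow> real \<Rightarrow> bool" where
  "is_mth_sol a h m q \<longleftrightarrow> q \<in> tan_sols a h \<and>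
     finite {s \<in> tan_sols a h. s < q} \<and> card {s \<in> tan_sols a h. s < q} = m - 1"

end

theory Submission
  imports Defs
begin

definition gg :: "real \<Rightarrow> real \<Rightarrow> real" where
  "gg b x = x - 2 * arctan (b / x)"

lemma gg_mono:
  assumes "0 < b" "0 < x" "x < y"
  shows "gg b x < gg b y"
proof -
  have "b / y < b / x" using assms by (simp add: frac_less2)
  hence "arctan (b / y) < arctan (b / x)" by (simp add: arctan_less_iff)
  thus ?thesis using assms unfolding gg_def by simp
qed

lemma gg_inj:
  assumes "0 < b" "0 < x" "0 < y" "gg b x = gg b y"
  shows "x = y"
  using gg_mono[OF assms(1,2)] gg_mono[OF assms(1,3)] assms(4)
  by (metis less_irrefl linorder_neqE_linordered_idom)

lemma gg_cont:
  assumes "0 < lo"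
  shows "continuous_on {lo..hi} (gg b)"
  unfolding gg_def using assms by (intro continuous_intros) auto

lemma gg_exists:
  assumes "0 < b" "b < pi/2"
  shows "\<exists>x>0. gg b x = real k * pi"
proof (cases "k = 0")
  case True
  have "gg b b \<le> 0" using assms by (simp add: gg_def arctan_one)
  moreover have "0 \<le> gg b pi"
    using arctan_bounded[of "b/pi"] by (simp add: gg_def)
  moreover have "b \<le> pi" using assms by simp
  ultimately obtain x where "x \<ge> b" "x \<le> pi" "gg b x = 0"
    using IVT'[of "gg b" b 0 pi] gg_cont[OF assms(1)] by auto
  thus ?thesis using True assms by (intro exI[of _ x]) auto
next
  case False
  hence k1: "real k \<ge> 1" by simp
  have "arctan (b / (real k * pi)) > 0" using assms k1 by (simp add: arctan_less_iff[of 0, simplified])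
  hence "gg b (real k * pi) \<le> real k * pi" by (simp add: gg_def)
  moreover have "real k * pi \<le> gg b (real k * pi + pi)"
    using arctan_bounded[of "b/(real k * pi + pi)"] by (simp add: gg_def)
  moreover have "real k * pi \<le> real k * pi + pi" by simp
  moreover have "0 < real k * pi" using k1 by simp
  ultimately obtain x where "x \<ge> real k * pi" "gg b x = real k * pi"
    using IVT'[of "gg b" "real k * pi" "real k * pi" "real k * pi + pi"] gg_cont[of "real k * pi"] by auto
  thus ?thesis using k1 by (intro exI[of _ x]) (auto intro: less_le_trans[of 0 "real k * pi"])
qed

lemma dd: "(P::real) \<noteq> 0 \<Longrightarrow> (A/P)/(B/P) = A/B" by simp

lemma trig2:
  assumes "x > 0"
  shows "cos (2 * arctan (b / x)) = (x^2 - b^2) / (x^2 + b^2)"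
    and "sin (2 * arctan (b / x)) = 2 * b * x / (x^2 + b^2)"
proof -
  have r: "sqrt (1 + (b/x)^2) ^ 2 = 1 + (b/x)^2" by (simp add: add_pos_nonneg)
  have p: "x^2 + b^2 > 0" using assms by (simp add: add_pos_nonneg)
  have p4: "x ^ 4 + b^2 * x^2 > 0" using assms by (simp add: add_pos_nonneg)
  show "cos (2 * arctan (b / x)) = (x^2 - b^2) / (x^2 + b^2)"
    unfolding cos_double cos_arctan sin_arctan
    using assms p apply (simp add: power_divide r)
    apply (simp add: field_simps)
    apply (subst eq_divide_eq)
    using assms p4 by (auto simp: algebra_simps)
  have "sin (2 * arctan (b / x)) = 2 * (b/x) / (sqrt (1 + (b/x)^2))^2"
    unfolding sin_double cos_arctan sin_arctan by (simp add: power2_eq_square)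
  also have "\<dots> = 2 * (b/x) / (1 + (b/x)^2)" using r by simp
  also have "\<dots> = (2*b*x / x^2) / ((x^2+b^2)/x^2)" using assms
    by (simp add: power2_eq_square add_divide_distrib)
  also have "\<dots> = 2*b*x/(x^2+b^2)" using assms by (simp add: dd)
  finally show "sin (2 * arctan (b / x)) = 2 * b * x / (x^2 + b^2)" .
qed

lemma gg_char:
  assumes "0 < b" "b < pi/2" "0 < x"
  shows "(cos x \<noteq> 0 \<and> x^2 \<noteq> b^2 \<and> tan x = 2*b*x/(x^2-b^2)) \<longleftrightarrow> (\<exists>k::nat. gg b x = real k * pi)"
proof -
  define y where "y = 2 * arctan (b / x)"
  have cy: "cos y = (x^2 - b^2) / (x^2 + b^2)" and sy: "sin y = 2 * b * x / (x^2 + b^2)"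
    unfolding y_def using trig2 assms(3) by auto
  have p: "x^2 + b^2 > 0" using assms by (simp add: add_pos_nonneg)
  have pn: "x^2 + b^2 \<noteq> 0" using p by linarith
  have g: "gg b x = x - y" unfolding gg_def y_def by simp
  have ylt: "y < pi" unfolding y_def using arctan_bounded[of "b/x"] by simp
  show ?thesis
  proof
    assume H: "cos x \<noteq> 0 \<and> x^2 \<noteq> b^2 \<and> tan x = 2*b*x/(x^2-b^2)"
    have d: "x^2 - b^2 \<noteq> 0" using H by simp
    have cyn: "cos y \<noteq> 0" using cy d p assms by simp
    have q: "sin y / cos y = 2*b*x/(x^2-b^2)" unfolding cy sy by (rule dd[OF pn])
    have "sin x / cos x = sin y / cos y" using H q by (simp add: tan_def)
    hence "sin x * cos y = sin y * cos x" using H cyn by (simp add: frac_eq_eq)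
    hence "sin x * cos y - cos x * sin y = 0" by (simp add: mult.commute)
    hence "sin (x - y) = 0" by (simp add: sin_diff)
    then obtain i :: int where i: "x - y = of_int i * pi" by (auto simp: sin_zero_iff_int2)
    have "of_int i * pi > - pi" using i ylt assms by linarith
    hence "(of_int i + 1) * pi > 0" by (simp add: distrib_right)
    hence "of_int i + 1 > (0::real)" by (simp add: zero_less_mult_iff)
    hence "i > -1" by linarith
    hence "real (nat i) = of_int i" by simp
    thus "\<exists>k::nat. gg b x = real k * pi" using g i by metis
  next
    assume "\<exists>k::nat. gg b x = real k * pi"
    then obtain k :: nat where k: "x = real k * pi + y" using g by (metis diff_eq_eq add.commute)
    have cx: "cos x = (-1)^k * cos y" and sx: "sin x = (-1)^k * sin y"
      unfolding k by (simp_all add: cos_add sin_add sin_npi cos_npi)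
    have "x \<noteq> b"
    proof
      assume "x = b"
      hence "gg b x = b - pi/2" using assms by (simp add: gg_def arctan_one)
      moreover have "gg b x = real k * pi" using k g by simp
      moreover have "real k * pi \<ge> 0" by simp
      ultimately show False using assms by linarith
    qed
    hence xb: "x^2 \<noteq> b^2" using assms by (simp add: power2_eq_iff)
    hence d: "x^2 - b^2 \<noteq> 0" by simp
    have cyn: "cos y \<noteq> 0" using cy d p assms by simp
    have cxn: "cos x \<noteq> 0" using cx cyn by simp
    have "tan x = sin y / cos y" using cx sx by (simp add: tan_def)
    also have "\<dots> = 2*b*x/(x^2-b^2)" unfolding cy sy by (rule dd[OF pn])
    finally show "cos x \<noteq> 0 \<and> x^2 \<noteq> b^2 \<and> tan x = 2*b*x/(x^2-b^2)" using cxn xb by simp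
  qed
qed
lemma sols_char:
  assumes "a > 0" "h > 0" "a * h < pi/2"
  shows "q \<in> tan_sols a h \<longleftrightarrow> 0 < q \<and> (\<exists>k::nat. gg (a*h) (h*q) = real k * pi)"
proof (cases "q > 0")
  case True
  have b: "0 < a*h" using assms by simp
  have hq: "0 < h*q" using assms True by simp
  have e1: "(h*q)^2 = h^2 * q^2" "(a*h)^2 = h^2*a^2" by (simp_all add: power_mult_distrib)
  have h2: "h^2 \<noteq> 0" using assms by simp
  have e2: "((h*q)^2 \<noteq> (a*h)^2) \<longleftrightarrow> q^2 \<noteq> a^2" unfolding e1 using h2 by simp
  have e3: "2*(a*h)*(h*q)/((h*q)^2-(a*h)^2) = 2*a*q/(q^2-a^2)"
  proof -
    have "2*(a*h)*(h*q)/((h*q)^2-(a*h)^2) = (h^2*(2*a*q))/(h^2*(q^2-a^2))"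
      unfolding e1 by (simp add: power2_eq_square algebra_simps)
    also have "\<dots> = 2*a*q/(q^2-a^2)" using h2 by simp
    finally show ?thesis .
  qed
  have "q \<in> tan_sols a h \<longleftrightarrow> (cos (h*q) \<noteq> 0 \<and> (h*q)^2 \<noteq> (a*h)^2 \<and> tan (h*q) = 2*(a*h)*(h*q)/((h*q)^2-(a*h)^2))"
    unfolding tan_sols_def e2 e3 using True by simp
  also have "\<dots> \<longleftrightarrow> (\<exists>k::nat. gg (a*h) (h*q) = real k * pi)"
    by (rule gg_char[OF b assms(3) hq])
  finally show ?thesis using True by simp
next
  case False
  then show ?thesis by (simp add: tan_sols_def)
qed

theorem lemma3p2:
  fixes a h :: real and m :: nat
  assumes "a > 0" and "h > 0" and "h < pi / (2 * a)" and "m \<ge> 2"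
  shows "(\<exists>q. is_mth_sol a h m q) \<and>
         (\<forall>q. is_mth_sol a h m q \<longrightarrow>
              real (m - 1) * pi / h \<le> q \<and> q \<le> real (m - 1) * pi / h + pi / (2 * h))"
proof -
  define b where "b = a * h"
  have b0: "0 < b" unfolding b_def using assms by simp
  have "h * (2 * a) < pi" using assms(3) assms(1) by (simp add: pos_less_divide_eq)
  hence bpi: "b < pi/2" unfolding b_def by (simp add: algebra_simps)
  have S: "\<And>q. q \<in> tan_sols a h \<longleftrightarrow> 0 < q \<and> (\<exists>k::nat. gg b (h*q) = real k * pi)"
    using sols_char[OF assms(1,2)] bpi unfolding b_def by simp
  define X where "X k = (SOME x. x > 0 \<and> gg b x = real k * pi)" for k :: nat
  have X: "X k > 0 \<and> gg b (X k) = real k * pi" for k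
    unfolding X_def using someI_ex[OF gg_exists[OF b0 bpi, of k]] by simp
  have below: "{s \<in> tan_sols a h. s < q} = (\<lambda>k. X k / h) ` {..<j}"
    if q: "0 < q" "gg b (h*q) = real j * pi" for q j
  proof
    show "{s \<in> tan_sols a h. s < q} \<subseteq> (\<lambda>k. X k / h) ` {..<j}"
    proof
      fix s assume "s \<in> {s \<in> tan_sols a h. s < q}"
      then obtain k :: nat where s: "0 < s" "s < q" "gg b (h*s) = real k * pi" using S by auto
      have "gg b (h*s) < gg b (h*q)" using gg_mono[OF b0, of "h*s" "h*q"] s assms(2) by simp
      hence "k < j" using s q by simp
      moreover have "X k = h * s" using gg_inj[OF b0, of "X k" "h*s"] X[of k] s assms(2) by simp
      ultimately show "s \<in> (\<lambda>k. X k / h) ` {..<j}" using assms(2)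
        by (intro image_eqI[of _ _ k]) auto
    qed
  next
    show "(\<lambda>k. X k / h) ` {..<j} \<subseteq> {s \<in> tan_sols a h. s < q}"
    proof
      fix s assume "s \<in> (\<lambda>k. X k / h) ` {..<j}"
      then obtain k where k: "k < j" "s = X k / h" by auto
      have hs: "h * s = X k" using k assms(2) by simp
      have s0: "0 < s" using k X[of k] assms(2) by simp
      have "s < q"
      proof (rule ccontr)
        assume "\<not> s < q"
        hence "h*q \<le> h*s" using assms(2) by simp
        hence "h*q < h*s \<or> h*q = h*s" by auto
        moreover have "h*q < h*s \<Longrightarrow> gg b (h*q) < gg b (h*s)" using gg_mono[OF b0, of "h*q" "h*s"] q assms(2) by simp
        ultimately have "gg b (h*q) \<le> gg b (h*s)" by auto
        hence "real j * pi \<le> real k * pi" using q hs X[of k] by simp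
        thus False using k by simp
      qed
      thus "s \<in> {s \<in> tan_sols a h. s < q}" using S s0 hs X[of k] by auto
    qed
  qed
  have injX: "inj_on (\<lambda>k. X k / h) A" for A
  proof (rule inj_onI)
    fix k l assume "X k / h = X l / h"
    hence "X k = X l" using assms(2) by simp
    hence "gg b (X k) = gg b (X l)" by (rule arg_cong)
    hence "real k * pi = real l * pi" using X[of k] X[of l] by linarith
    thus "k = l" by simp
  qed
  have cardj: "finite {s \<in> tan_sols a h. s < q} \<and> card {s \<in> tan_sols a h. s < q} = j"
    if "0 < q" "gg b (h*q) = real j * pi" for q j
    unfolding below[OF that] using injX by (simp add: card_image)
  show ?thesis
  proof
    define q where "q = X (m-1) / h"
    have q0: "0 < q" and hq: "h * q = X (m-1)" using X assms(2) unfolding q_def by auto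
    have "gg b (h*q) = real (m-1) * pi" using hq X by simp
    moreover have "q \<in> tan_sols a h" using S q0 \<open>gg b (h*q) = real (m-1) * pi\<close> by blast
    ultimately have "is_mth_sol a h m q" unfolding is_mth_sol_def using cardj[OF q0] by blast
    thus "\<exists>q. is_mth_sol a h m q" by blast
  next
    show "\<forall>q. is_mth_sol a h m q \<longrightarrow>
              real (m - 1) * pi / h \<le> q \<and> q \<le> real (m - 1) * pi / h + pi / (2 * h)"
    proof (intro allI impI)
      fix q assume H: "is_mth_sol a h m q"
      then obtain j :: nat where q0: "0 < q" and j: "gg b (h*q) = real j * pi"
        unfolding is_mth_sol_def using S by blast
      have "j = m - 1" using H cardj[OF q0 j] unfolding is_mth_sol_def by simp
      hence j1: "real j \<ge> 1" using assms(4) by simp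
      have hq0: "0 < h*q" using q0 assms(2) by simp
      have eq: "h*q = real j * pi + 2 * arctan (b / (h*q))" using j unfolding gg_def by simp
      have "arctan (b / (h*q)) > 0" using b0 hq0 by (simp add: arctan_less_iff[of 0, simplified])
      hence lo: "real j * pi \<le> h*q" using eq by linarith
      have "pi \<le> real j * pi" using j1 by simp
      hence "pi \<le> h*q" using lo by linarith
      hence "b / (h*q) < 1" using bpi hq0 by (simp add: divide_less_eq)
      hence "arctan (b / (h*q)) < arctan 1" by (simp only: arctan_less_iff)
      hence "arctan (b / (h*q)) < pi/4" by (simp only: arctan_one)
      hence up: "h*q \<le> real j * pi + pi/2" using eq by linarith
      have "real j * pi / h \<le> q" using lo assms(2) by (simp add: divide_le_eq mult.commute)
      moreover have "q \<le> real j * pi / h + pi / (2*h)"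
      proof -
        have "real j * pi / h + pi / (2*h) = (real j * pi + pi/2) / h" using assms(2) by (simp add: field_simps)
        thus ?thesis using up assms(2) by (simp add: le_divide_eq mult.commute)
      qed
      ultimately show "real (m - 1) * pi / h \<le> q \<and> q \<le> real (m - 1) * pi / h + pi / (2 * h)"
        using \<open>j = m - 1\<close> by simp
    qed
  qed
qed

end
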